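(* Let $\rho$ be a representation of $D^{2,2,2}$, let $\{i,j,k\}=\{1,2,3\}$, and let $a,b\in D^{2,2,2}$. Then: 1. $\psi_i(a)+\psi_i(b)=\psi_i(a+b)$; 2. $\psi_i(a)\cap\psi_i(b)=\psi_i\big((a+x_i)(b+x_jx_k)\big)$; 3. $\psi_i(a)\cap\psi_i(b)=\psi_i\big(a(b+x_i+x_jx_k)\big)$.
   Context: $D^{2,2,2}$ is the modular lattice generated by $x_1,y_1,x_2,y_2,x_3,y_3$ subject only to $x_i\subseteq y_i$ ($i=1,2,3$), with a greatest element $I$ adjoined. Meet is written $ab$, join $a+b$. A representation $\rho$ of $D^{2,2,2}$ in a finite-dimensional vector space $X_0$ is a lattice morphism from $D^{2,2,2}$ to the subspace lattice of $X_0$, with $\rho(I)=X_0$. Write $X_i=\rho(x_i)\subseteq Y_i=\rho(y_i)$. Put $R=Y_1\oplus Y_2\oplus Y_3$ and $X^1_0=\{(\eta_1,\eta_2,\eta_3)\in R:\sum\eta_i=0\}$. Define subspaces of $R$: - $G_i$: triples with $i$-th coordinate in $Y_i$ and the others $0$; - $G'_i$: triples with $i$-th coordinate in $X_i$; - $H'_i$: triples with $i$-th coordinate $0$. $\Phi^+\rho$ is the representation in $X^1_0$ with $\Phi^+\rho(y_i)=G'_i\cap X^1_0$, $\Phi^+\rho(x_i)=H'_i\cap X^1_0$, $\Phi^+\rho(I)=X^1_0$. Set $\nu^1(a)=\Phi^+\rho(a)\subseteq R$. The joint map is $\psi_i(a)=X^1_0+G_i\cap(H'_i+\nu^1(a))$.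 *)

theory Defs
  imports Main "HOL-Library.Function_Algebras"
begin

datatype idx = I1 | I2 | I3

text \<open>Lattice terms over the generators of D^{2,2,2} (with adjoined top I).
  Every element of D^{2,2,2} is denoted by such a term.\<close>
datatype lterm = Gx idx | Gy idx | Top | Meet lterm lterm | Join lterm lterm

definition ssum :: "'v::plus set \<Rightarrow> 'v set \<Rightarrow> 'v set" where
  "ssum A B = {a + b | a b. a \<in> A \<and> b \<in> B}"

definition is_subspace :: "('n::finite \<Rightarrow> 'k::field) set \<Rightarrow> bool" where
  "is_subspace S \<longleftrightarrow> 0 \<in> S \<and> (\<forall>x\<in>S. \<forall>y\<in>S. x + y \<in> S)
      \<and> (\<forall>c. \<forall>x\<in>S. (\<lambda>n. c * x n) \<in> S)"

text \<open>Value of a lattice term under the representation determined by the images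
  of the generators (top, x_i, y_i); meet is intersection, join is subspace sum.\<close>
fun ev :: "'v::plus set \<Rightarrow> (idx \<Rightarrow> 'v set) \<Rightarrow> (idx \<Rightarrow> 'v set) \<Rightarrow> lterm \<Rightarrow> 'v set" where
  "ev T X Y (Gx i) = X i"
| "ev T X Y (Gy i) = Y i"
| "ev T X Y Top = T"
| "ev T X Y (Meet a b) = ev T X Y a \<inter> ev T X Y b"
| "ev T X Y (Join a b) = ssum (ev T X Y a) (ev T X Y b)"

definition Rsp :: "(idx \<Rightarrow> ('n \<Rightarrow> 'k::field) set) \<Rightarrow> (idx \<Rightarrow> 'n \<Rightarrow> 'k) set" where
  "Rsp Y = {\<eta>. \<forall>j. \<eta> j \<in> Y j}"

definition X10 :: "(idx \<Rightarrow> ('n \<Rightarrow> 'k::field) set) \<Rightarrow> (idx \<Rightarrow> 'n \<Rightarrow> 'k) set" where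
  "X10 Y = {\<eta> \<in> Rsp Y. \<eta> I1 + \<eta> I2 + \<eta> I3 = 0}"

definition Gsp :: "(idx \<Rightarrow> ('n \<Rightarrow> 'k::field) set) \<Rightarrow> idx \<Rightarrow> (idx \<Rightarrow> 'n \<Rightarrow> 'k) set" where
  "Gsp Y i = {\<eta> \<in> Rsp Y. \<forall>j. j \<noteq> i \<longrightarrow> \<eta> j = 0}"

definition G'sp :: "(idx \<Rightarrow> ('n \<Rightarrow> 'k::field) set) \<Rightarrow> (idx \<Rightarrow> ('n \<Rightarrow> 'k) set) \<Rightarrow> idx \<Rightarrow> (idx \<Rightarrow> 'n \<Rightarrow> 'k) set" where
  "G'sp X Y i = {\<eta> \<in> Rsp Y. \<eta> i \<in> X i}"

definition H'sp :: "(idx \<Rightarrow> ('n \<Rightarrow> 'k::field) set) \<Rightarrow> idx \<Rightarrow> (idx \<Rightarrow> 'n \<Rightarrow> 'k) set" where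
  "H'sp Y i = {\<eta> \<in> Rsp Y. \<eta> i = 0}"

text \<open>nu^1(a) = Phi^+ rho (a), a subspace of R.\<close>
definition nu1 :: "(idx \<Rightarrow> ('n \<Rightarrow> 'k::field) set) \<Rightarrow> (idx \<Rightarrow> ('n \<Rightarrow> 'k) set) \<Rightarrow> lterm \<Rightarrow> (idx \<Rightarrow> 'n \<Rightarrow> 'k) set" where
  "nu1 X Y a = ev (X10 Y) (\<lambda>i. H'sp Y i \<inter> X10 Y) (\<lambda>i. G'sp X Y i \<inter> X10 Y) a"

definition psi :: "(idx \<Rightarrow> ('n \<Rightarrow> 'k::field) set) \<Rightarrow> (idx \<Rightarrow> ('n \<Rightarrow> 'k) set) \<Rightarrow> idx \<Rightarrow> lterm \<Rightarrow> (idx \<Rightarrow> 'n \<Rightarrow> 'k) set" where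
  "psi X Y i a = ssum (X10 Y) (Gsp Y i \<inter> ssum (H'sp Y i) (nu1 X Y a))"

end

theory Submission imports Defs begin

definition grp :: "('a::ab_group_add) set \<Rightarrow> bool" where
  "grp S \<longleftrightarrow> 0\<in>S \<and> (\<forall>x\<in>S. \<forall>y\<in>S. x+y\<in>S) \<and> (\<forall>x\<in>S. -x\<in>S)"

lemma grp_diff: "grp S \<Longrightarrow> x \<in> S \<Longrightarrow> y \<in> S \<Longrightarrow> x - y \<in> S"
  unfolding grp_def by (metis diff_conv_add_uminus)

lemma subsp_grp: "is_subspace (S::('n::finite \<Rightarrow> 'k::field) set) \<Longrightarrow> grp S"
  unfolding is_subspace_def grp_def
proof (intro conjI ballI; (elim conjE)?)
  fix x assume "\<forall>c. \<forall>x\<in>S. (\<lambda>n. c * x n) \<in> S" "x \<in> S"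
  then have "(\<lambda>n. (-1) * x n) \<in> S" by blast
  moreover have "(\<lambda>n. (-1) * x n) = -x" by (rule ext) simp
  ultimately show "-x \<in> S" by simp
qed auto

lemma grp_ssum: "grp A \<Longrightarrow> grp B \<Longrightarrow> grp (ssum A B)"
  unfolding grp_def ssum_def
proof (intro conjI ballI; (elim conjE)?)
  assume "0 \<in> A" "0 \<in> B" then show "0 \<in> {a + b |a b. a \<in> A \<and> b \<in> B}" by force
next
  fix x y assume A: "\<forall>x\<in>A. \<forall>y\<in>A. x + y \<in> A" and B: "\<forall>x\<in>B. \<forall>y\<in>B. x + y \<in> B"
    and x: "x \<in> {a + b |a b. a \<in> A \<and> b \<in> B}" and y: "y \<in> {a + b |a b. a \<in> A \<and> b \<in> B}"
  from x obtain a b where "x = a + b" "a \<in> A" "b \<in> B" by blast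
  moreover from y obtain a' b' where "y = a' + b'" "a' \<in> A" "b' \<in> B" by blast
  ultimately show "x + y \<in> {a + b |a b. a \<in> A \<and> b \<in> B}" using A B
    by (intro CollectI exI[of _ "a+a'"] exI[of _ "b+b'"]) (simp add: algebra_simps)
next
  fix x assume A: "\<forall>x\<in>A. - x \<in> A" and B: "\<forall>x\<in>B. - x \<in> B"
    and x: "x \<in> {a + b |a b. a \<in> A \<and> b \<in> B}"
  from x obtain a b where "x = a + b" "a \<in> A" "b \<in> B" by blast
  then show "- x \<in> {a + b |a b. a \<in> A \<and> b \<in> B}" using A B
    by (intro CollectI exI[of _ "-a"] exI[of _ "-b"]) (simp add: algebra_simps)
qed

lemma ssum_sub: "grp C \<Longrightarrow> A \<subseteq> C \<Longrightarrow> B \<subseteq> C \<Longrightarrow> ssum A B \<subseteq> C"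
  unfolding ssum_def grp_def by blast

lemma grp_Int: "grp A \<Longrightarrow> grp B \<Longrightarrow> grp (A \<inter> B)"
  unfolding grp_def by blast

lemma ev_grp:
  assumes "grp T" "\<And>l. grp (Xs l) \<and> Xs l \<subseteq> T" "\<And>l. grp (Ys l) \<and> Ys l \<subseteq> T"
  shows "grp (ev T Xs Ys a) \<and> ev T Xs Ys a \<subseteq> T"
  by (induction a) (auto simp: assms grp_Int grp_ssum ssum_sub)

definition sm :: "(idx \<Rightarrow> 'a::ab_group_add) \<Rightarrow> 'a" where "sm e = e I1 + e I2 + e I3"

definition sing :: "idx \<Rightarrow> 'a::ab_group_add \<Rightarrow> idx \<Rightarrow> 'a" where
  "sing i x = (\<lambda>j. if j = i then x else 0)"

lemma sm_sing[simp]: "sm (sing i x) = x"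
  by (cases i) (simp_all add: sm_def sing_def)

lemma sm_add[simp]: "sm (a + b) = sm a + sm b" by (simp add: sm_def algebra_simps)
lemma sm_neg[simp]: "sm (- a) = - sm a" by (simp add: sm_def algebra_simps)
lemma sm_diff[simp]: "sm (a - b) = sm a - sm b" by (simp add: sm_def algebra_simps)

lemma grp_Rsp: "(\<And>l. grp (Y l)) \<Longrightarrow> grp (Rsp Y)"
  unfolding grp_def Rsp_def by auto

lemma grp_X10: "(\<And>l. grp (Y l)) \<Longrightarrow> grp (X10 Y)"
proof -
  assume "\<And>l. grp (Y l)"
  then have R: "grp (Rsp Y)" by (rule grp_Rsp)
  have s1: "sm (x + y) = 0" if "sm x = 0" "sm y = 0" for x y :: "idx \<Rightarrow> 'a \<Rightarrow> 'b"
    using that by simp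
  have s2: "sm (- x) = 0" if "sm x = 0" for x :: "idx \<Rightarrow> 'a \<Rightarrow> 'b"
    using that by simp
  have X: "X10 Y = {\<eta> \<in> Rsp Y. sm \<eta> = 0}" unfolding X10_def sm_def by simp
  show ?thesis unfolding X grp_def using R s1 s2 unfolding grp_def by (auto simp: sm_def)
qed


lemma grp_add: "grp S \<Longrightarrow> x \<in> S \<Longrightarrow> y \<in> S \<Longrightarrow> x + y \<in> S"
  unfolding grp_def by blast

lemma ssumI: "x \<in> A \<Longrightarrow> y \<in> B \<Longrightarrow> x + y \<in> ssum A B"
  unfolding ssum_def by blast

lemma ssumE: "z \<in> ssum A B \<Longrightarrow> (\<And>x y. z = x + y \<Longrightarrow> x \<in> A \<Longrightarrow> y \<in> B \<Longrightarrow> P) \<Longrightarrow> P"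
  unfolding ssum_def by blast

lemma sing_Rsp: "(\<And>l. grp (Y l)) \<Longrightarrow> x \<in> Y i \<Longrightarrow> sing i x \<in> Rsp Y"
  unfolding Rsp_def sing_def grp_def by auto

lemma psi_char:
  assumes Yg: "\<And>l. grp (Y l)" and ng: "grp (nu1 X Y a)" and ns: "nu1 X Y a \<subseteq> X10 Y"
  shows "psi X Y i a = {\<eta> \<in> Rsp Y. sm \<eta> \<in> (\<lambda>v. v i) ` nu1 X Y a}"
proof (intro set_eqI iffI)
  have R: "grp (Rsp Y)" using grp_Rsp Yg by blast
  fix \<eta>
  {
    assume "\<eta> \<in> psi X Y i a"
    then obtain \<xi> g' where e: "\<eta> = \<xi> + g'" and xi: "\<xi> \<in> X10 Y" 
      and gg: "g' \<in> Gsp Y i \<inter> ssum (H'sp Y i) (nu1 X Y a)"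
      unfolding psi_def by (rule ssumE)
    define g where "g = g'"
    have g: "g \<in> Gsp Y i" and gh: "g \<in> ssum (H'sp Y i) (nu1 X Y a)" using gg g_def by auto
    have e: "\<eta> = \<xi> + g" using e g_def by simp
    from gh obtain h v where gv: "g = h + v" and h: "h \<in> H'sp Y i" and v: "v \<in> nu1 X Y a"
      by (rule ssumE)
    have "\<forall>j. j \<noteq> i \<longrightarrow> g j = 0" using g unfolding Gsp_def by blast
    then have "g = sing i (g i)" unfolding sing_def by (intro ext) simp
    then have sg: "sm g = g i" by (metis sm_sing)
    have "g i = v i" using gv h unfolding H'sp_def by auto
    moreover have "sm \<xi> = 0" using xi unfolding X10_def sm_def by auto
    ultimately have "sm \<eta> = v i" using e sg by simp
    moreover have "\<eta> \<in> Rsp Y" using e xi g grp_add[OF R] unfolding X10_def Gsp_def by blast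
    ultimately show "\<eta> \<in> {\<eta> \<in> Rsp Y. sm \<eta> \<in> (\<lambda>v. v i) ` nu1 X Y a}" using v by auto
  }
  {
    assume "\<eta> \<in> {\<eta> \<in> Rsp Y. sm \<eta> \<in> (\<lambda>v. v i) ` nu1 X Y a}"
    then obtain v where eR: "\<eta> \<in> Rsp Y" and v: "v \<in> nu1 X Y a" and sv: "sm \<eta> = v i" by auto
    have vR: "v \<in> Rsp Y" using v ns unfolding X10_def by auto
    then have "v i \<in> Y i" unfolding Rsp_def by auto
    define g where "g = sing i (v i)"
    have gR: "g \<in> Rsp Y" unfolding g_def using sing_Rsp[of Y, OF Yg] \<open>v i \<in> Y i\<close> by blast
    have gG: "g \<in> Gsp Y i" using gR unfolding Gsp_def g_def sing_def by auto
    have "(g - v) i = 0" unfolding g_def sing_def by simp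
    then have "g - v \<in> H'sp Y i" using grp_diff[OF R gR vR] by (simp add: H'sp_def)
    then have "(g - v) + v \<in> ssum (H'sp Y i) (nu1 X Y a)" using v by (rule ssumI)
    then have "g \<in> ssum (H'sp Y i) (nu1 X Y a)" by simp
    moreover have "\<eta> - g \<in> X10 Y"
    proof -
      have "sm (\<eta> - g) = 0" using sv unfolding g_def by simp
      then show ?thesis using grp_diff[OF R eR gR] by (simp add: X10_def sm_def)
    qed
    ultimately have "(\<eta> - g) + g \<in> psi X Y i a" unfolding psi_def using gG
      by (intro ssumI) auto
    then show "\<eta> \<in> psi X Y i a" by simp
  }
qed


lemma pre_ssum:
  assumes Yg: "\<And>l. grp (Y l)" and A: "A \<subseteq> Y i" and B: "B \<subseteq> Y i"
  shows "ssum {\<eta> \<in> Rsp Y. sm \<eta> \<in> A} {\<eta> \<in> Rsp Y. sm \<eta> \<in> B} = {\<eta> \<in> Rsp Y. sm \<eta> \<in> ssum A B}"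
proof (intro set_eqI iffI)
  have R: "grp (Rsp Y)" using grp_Rsp Yg by blast
  fix \<eta>
  {
    assume "\<eta> \<in> ssum {\<eta> \<in> Rsp Y. sm \<eta> \<in> A} {\<eta> \<in> Rsp Y. sm \<eta> \<in> B}"
    then obtain e1 e2 where "\<eta> = e1 + e2" "e1 \<in> {\<eta> \<in> Rsp Y. sm \<eta> \<in> A}" "e2 \<in> {\<eta> \<in> Rsp Y. sm \<eta> \<in> B}"
      by (rule ssumE)
    then show "\<eta> \<in> {\<eta> \<in> Rsp Y. sm \<eta> \<in> ssum A B}"
      using grp_add[OF R] ssumI[of "sm e1" A "sm e2" B] by auto
  }
  {
    assume "\<eta> \<in> {\<eta> \<in> Rsp Y. sm \<eta> \<in> ssum A B}"
    then have eR: "\<eta> \<in> Rsp Y" and ss: "sm \<eta> \<in> ssum A B" by auto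
    from ss obtain x y where xy: "sm \<eta> = x + y" "x \<in> A" "y \<in> B" by (rule ssumE)
    have s1: "sing i x \<in> Rsp Y" using sing_Rsp[of Y, OF Yg] xy A by blast
    have s2: "\<eta> - sing i x \<in> Rsp Y" using grp_diff[OF R eR s1] .
    have "sm (\<eta> - sing i x) = y" using xy by simp
    then have "sing i x + (\<eta> - sing i x) \<in> ssum {\<eta> \<in> Rsp Y. sm \<eta> \<in> A} {\<eta> \<in> Rsp Y. sm \<eta> \<in> B}"
      using s1 s2 xy by (intro ssumI) auto
    then show "\<eta> \<in> ssum {\<eta> \<in> Rsp Y. sm \<eta> \<in> A} {\<eta> \<in> Rsp Y. sm \<eta> \<in> B}" by simp
  }
qed

lemma proj_ssum: "(\<lambda>v. v i) ` ssum N M = ssum ((\<lambda>v. v i) ` N) ((\<lambda>v. v i) ` M)"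
proof (intro set_eqI iffI)
  fix z
  assume "z \<in> (\<lambda>v. v i) ` ssum N M"
  then obtain w where "z = w i" "w \<in> ssum N M" by blast
  then obtain u v where "z = w i" "w = u + v" "u \<in> N" "v \<in> M" by (auto elim: ssumE)
  then show "z \<in> ssum ((\<lambda>v. v i) ` N) ((\<lambda>v. v i) ` M)" by (simp add: ssumI)
next
  fix z
  assume "z \<in> ssum ((\<lambda>v. v i) ` N) ((\<lambda>v. v i) ` M)"
  then obtain x y where "z = x + y" "x \<in> (\<lambda>v. v i) ` N" "y \<in> (\<lambda>v. v i) ` M" by (rule ssumE)
  then obtain u v where "z = u i + v i" "u \<in> N" "v \<in> M" by blast
  then have "z = (u + v) i" "u + v \<in> ssum N M" by (auto simp: ssumI)
  then show "z \<in> (\<lambda>v. v i) ` ssum N M" by blast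
qed

lemma proj_meet:
  assumes Yg: "\<And>l. grp (Y l)" and N: "N \<subseteq> X10 Y" and M: "M \<subseteq> X10 Y"
  shows "(\<lambda>v. v i) ` (ssum N (H'sp Y i \<inter> X10 Y) \<inter> M) = (\<lambda>v. v i) ` N \<inter> (\<lambda>v. v i) ` M"
proof (intro set_eqI iffI)
  have X: "grp (X10 Y)" using grp_X10 Yg by blast
  fix z
  {
    assume "z \<in> (\<lambda>v. v i) ` (ssum N (H'sp Y i \<inter> X10 Y) \<inter> M)"
    then obtain w where w: "z = w i" "w \<in> ssum N (H'sp Y i \<inter> X10 Y)" "w \<in> M" by blast
    then obtain u h where "w = u + h" "u \<in> N" "h \<in> H'sp Y i" by (auto elim: ssumE)
    then have "w i = u i" "u \<in> N" by (auto simp: H'sp_def)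
    then show "z \<in> (\<lambda>v. v i) ` N \<inter> (\<lambda>v. v i) ` M" using w by (metis IntI image_eqI)
  }
  {
    assume "z \<in> (\<lambda>v. v i) ` N \<inter> (\<lambda>v. v i) ` M"
    then obtain u w where uw: "z = u i" "z = w i" "u \<in> N" "w \<in> M" by blast
    have d: "w - u \<in> X10 Y" using grp_diff[OF X] uw N M by blast
    then have "w - u \<in> Rsp Y" unfolding X10_def by blast
    moreover have "(w - u) i = 0" using uw by simp
    ultimately have "w - u \<in> H'sp Y i \<inter> X10 Y" using d unfolding H'sp_def by blast
    then have "u + (w - u) \<in> ssum N (H'sp Y i \<inter> X10 Y)" using uw by (intro ssumI)
    then have "w \<in> ssum N (H'sp Y i \<inter> X10 Y) \<inter> M" using uw by simp
    then show "z \<in> (\<lambda>v. v i) ` (ssum N (H'sp Y i \<inter> X10 Y) \<inter> M)" using uw by blast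
  }
qed

lemma idx_cover: "(i::idx) \<noteq> j \<Longrightarrow> j \<noteq> k \<Longrightarrow> i \<noteq> k \<Longrightarrow> l = i \<or> l = j \<or> l = k"
  apply (cases l)
    apply (cases i; cases j; cases k; simp)
   apply (cases i; cases j; cases k; simp)
  apply (cases i; cases j; cases k; simp)
  done

lemma sm_ijk: "i \<noteq> j \<Longrightarrow> j \<noteq> k \<Longrightarrow> i \<noteq> k \<Longrightarrow> sm v = v i + v j + v k"
  by (cases i; cases j; cases k) (auto simp: sm_def algebra_simps)

lemma ssum_zero: "0 \<in> (S::'a::monoid_add set) \<Longrightarrow> ssum S {0} = S"
proof (intro set_eqI iffI)
  fix x assume "x \<in> ssum S {0}" then show "x \<in> S" by (rule ssumE) simp
next
  fix x assume "0 \<in> S" "x \<in> S" then have "x + 0 \<in> ssum S {0}" by (intro ssumI) auto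
  then show "x \<in> ssum S {0}" by simp
qed


lemma nu1_simps:
  "nu1 X Y (Join a b) = ssum (nu1 X Y a) (nu1 X Y b)"
  "nu1 X Y (Meet a b) = nu1 X Y a \<inter> nu1 X Y b"
  "nu1 X Y (Gx l) = H'sp Y l \<inter> X10 Y"
  by (simp_all add: nu1_def)

lemma grp_H': "(\<And>l. grp (Y l)) \<Longrightarrow> grp (H'sp Y l)"
  using grp_Rsp[of Y] unfolding grp_def H'sp_def by auto

lemma grp_G': "(\<And>l. grp (Y l)) \<Longrightarrow> grp (X l) \<Longrightarrow> grp (G'sp X Y l)"
  using grp_Rsp[of Y] unfolding grp_def G'sp_def by auto

theorem mainTheorem5:
  fixes X Y :: "idx \<Rightarrow> ('n::finite \<Rightarrow> 'k::field) set"
    and i j k :: idx and a b :: lterm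
  assumes "\<And>l. is_subspace (X l)" and "\<And>l. is_subspace (Y l)"
    and "\<And>l. X l \<subseteq> Y l"
    and "i \<noteq> j" and "j \<noteq> k" and "i \<noteq> k"
  shows "ssum (psi X Y i a) (psi X Y i b) = psi X Y i (Join a b)
    \<and> psi X Y i a \<inter> psi X Y i b
           = psi X Y i (Meet (Join a (Gx i)) (Join b (Meet (Gx j) (Gx k))))
    \<and> psi X Y i a \<inter> psi X Y i b
           = psi X Y i (Meet a (Join (Join b (Gx i)) (Meet (Gx j) (Gx k))))"
proof -
  have Yg: "\<And>l. grp (Y l)" using assms(2) subsp_grp by blast
  have Xg: "\<And>l. grp (X l)" using assms(1) subsp_grp by blast
  have Xs: "grp (X10 Y)" using grp_X10 Yg by blast
  have g1: "\<And>l. grp (H'sp Y l \<inter> X10 Y) \<and> H'sp Y l \<inter> X10 Y \<subseteq> X10 Y"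
    using grp_Int[OF grp_H'[of Y, OF Yg] Xs] by blast
  have g2: "\<And>l. grp (G'sp X Y l \<inter> X10 Y) \<and> G'sp X Y l \<inter> X10 Y \<subseteq> X10 Y"
    using grp_Int[OF grp_G'[of Y X, OF Yg Xg] Xs] by blast
  have nu: "grp (nu1 X Y c) \<and> nu1 X Y c \<subseteq> X10 Y" for c
    unfolding nu1_def by (rule ev_grp[OF Xs g1 g2])
  define P where "P c = (\<lambda>v. v i) ` nu1 X Y c" for c
  have ch: "psi X Y i c = {\<eta> \<in> Rsp Y. sm \<eta> \<in> P c}" for c
    unfolding P_def using psi_char[of Y, OF Yg] nu by blast
  have PY: "P c \<subseteq> Y i" for c
    using nu[of c] unfolding P_def X10_def Rsp_def by blast
  have int: "psi X Y i a \<inter> psi X Y i b = {\<eta> \<in> Rsp Y. sm \<eta> \<in> P a \<inter> P b}"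
    unfolding ch by blast
  have z: "nu1 X Y (Meet (Gx j) (Gx k)) = {0}"
  proof (intro set_eqI iffI)
    fix v assume "v \<in> nu1 X Y (Meet (Gx j) (Gx k))"
    then have v: "v j = 0" "v k = 0" "sm v = 0" unfolding nu1_simps H'sp_def X10_def sm_def by auto
    then have "v i = 0" using sm_ijk[OF assms(4-6), of v] by simp
    then have "v = 0" using v idx_cover[OF assms(4-6)] by (intro ext) (metis zero_fun_apply)
    then show "v \<in> {0}" by simp
  next
    fix v assume "v \<in> {0::idx \<Rightarrow> 'n \<Rightarrow> 'k}"
    then show "v \<in> nu1 X Y (Meet (Gx j) (Gx k))" using nu[of "Meet (Gx j) (Gx k)"] unfolding grp_def by simp
  qed
  have z0: "0 \<in> nu1 X Y c" for c using nu[of c] unfolding grp_def by blast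
  have p1: "P (Join a b) = ssum (P a) (P b)" unfolding P_def nu1_simps by (rule proj_ssum)
  have p2: "P (Meet (Join a (Gx i)) (Join b (Meet (Gx j) (Gx k)))) = P a \<inter> P b"
  proof -
    have "nu1 X Y (Meet (Join a (Gx i)) (Join b (Meet (Gx j) (Gx k))))
        = ssum (nu1 X Y a) (H'sp Y i \<inter> X10 Y) \<inter> nu1 X Y b"
      by (simp only: nu1_simps(2)[of X Y "Join a (Gx i)"] nu1_simps(1) z ssum_zero[OF z0] nu1_simps(3))
    then show ?thesis unfolding P_def
      using proj_meet[of Y, OF Yg, of "nu1 X Y a" "nu1 X Y b" i] nu by simp
  qed
  have p3: "P (Meet a (Join (Join b (Gx i)) (Meet (Gx j) (Gx k)))) = P a \<inter> P b"
  proof -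
    have "0 \<in> ssum (nu1 X Y b) (H'sp Y i \<inter> X10 Y)"
      using grp_ssum[OF conjunct1[OF nu] conjunct1[OF g1]] unfolding grp_def by blast
    then have "nu1 X Y (Meet a (Join (Join b (Gx i)) (Meet (Gx j) (Gx k))))
        = nu1 X Y a \<inter> ssum (nu1 X Y b) (H'sp Y i \<inter> X10 Y)"
      by (simp only: nu1_simps(2)[of X Y a] nu1_simps(1) z ssum_zero nu1_simps(3))
    then have "nu1 X Y (Meet a (Join (Join b (Gx i)) (Meet (Gx j) (Gx k))))
        = ssum (nu1 X Y b) (H'sp Y i \<inter> X10 Y) \<inter> nu1 X Y a" by (simp only: Int_commute)
    then show ?thesis unfolding P_def
      using proj_meet[of Y, OF Yg, of "nu1 X Y b" "nu1 X Y a" i] nu by (simp add: Int_commute)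
  qed
  show ?thesis
    unfolding int
    by (simp add: ch p1 p2 p3 pre_ssum[of Y, OF Yg PY PY])
qed

end
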